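(* Let $n\ge1$ and let $\mathcal P_n$ be the set of peakless weak Dyck paths with exactly $n$ steps of type $U$ or $H$. Executing a path $P\in\mathcal P_n$ with a stack (reading $U$ as push, $D$ as pop, $H$ as direct transfer) is always possible and yields a permutation $S(P)$; the map $S$ is a bijection from $\mathcal P_n$ onto the set of $312$-avoiding permutations of $\{1,\ldots,n\}$. Executing $P$ with a queue (reading $U$ as enqueue, $D$ as dequeue, $H$ as direct transfer) yields a permutation $Q(P)$; the map $Q$ is a bijection from $\mathcal P_n$ onto the set of $321$-avoiding permutations of $\{1,\ldots,n\}$. Consequently $|\mathcal P_n|=C_n=\frac{1}{2n+1}\binom{2n+1}{n+1}$, the number of $321$-avoiding permutations of $\{1,\ldots,n\}$ equals $C_n$, and $Q\circ S^{-1}$ is a bijection from $312$-avoiding permutations onto $321$-avoiding permutations of $\{1,\ldots,n\}$.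
   Context: A weak Dyck path is a finite word in the steps $U=(1,1)$, $D=(1,-1)$, $H=(1,0)$ whose lattice path starts at height $0$, ends at height $0$ and never goes below height $0$. It is peakless if no $U$ is immediately followed by $D$. Executing a path: input is $1,2,\ldots,n$ in order, storage (stack or queue) and output initially empty; the steps are performed in order, where push/enqueue moves the next input element into the storage (top of stack / back of queue), pop/dequeue moves the top of the stack / front of the queue to the end of the output, and direct transfer moves the next input element to the end of the output. A permutation avoids $312$ (resp. $321$) if there are no $i<j<k$ with $p_j<p_k<p_i$ (resp. $p_i>p_j>p_k$). *)

theory Defs
  imports Complex_Main
begin

datatype step = U | D | H

fun step_val :: "step \<Rightarrow> int" where
  "step_val U = 1" | "step_val D = -1" | "step_val H = 0"

definition height :: "step list \<Rightarrow> int" where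
  "height w = sum_list (map step_val w)"

definition weak_dyck :: "step list \<Rightarrow> bool" where
  "weak_dyck w \<longleftrightarrow> (\<forall>k\<le>length w. 0 \<le> height (take k w)) \<and> height w = 0"

definition peakless :: "step list \<Rightarrow> bool" where
  "peakless w \<longleftrightarrow> (\<forall>i. Suc i < length w \<longrightarrow> \<not> (w ! i = U \<and> w ! Suc i = D))"

definition num_UH :: "step list \<Rightarrow> nat" where
  "num_UH w = length (filter (\<lambda>s. s \<noteq> D) w)"

definition peakless_paths :: "nat \<Rightarrow> step list set" where
  "peakless_paths n = {w. weak_dyck w \<and> peakless w \<and> num_UH w = n}"

fun run_stack :: "step list \<Rightarrow> nat list \<Rightarrow> nat list \<Rightarrow> nat list \<Rightarrow> nat list option" where
  "run_stack [] inp st out = Some out"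
| "run_stack (U # w) (x # inp) st out = run_stack w inp (x # st) out"
| "run_stack (D # w) inp (x # st) out = run_stack w inp st (out @ [x])"
| "run_stack (H # w) (x # inp) st out = run_stack w inp st (out @ [x])"
| "run_stack _ _ _ _ = None"

fun run_queue :: "step list \<Rightarrow> nat list \<Rightarrow> nat list \<Rightarrow> nat list \<Rightarrow> nat list option" where
  "run_queue [] inp q out = Some out"
| "run_queue (U # w) (x # inp) q out = run_queue w inp (q @ [x]) out"
| "run_queue (D # w) inp (x # q) out = run_queue w inp q (out @ [x])"
| "run_queue (H # w) (x # inp) q out = run_queue w inp q (out @ [x])"
| "run_queue _ _ _ _ = None"

definition stack_exec :: "step list \<Rightarrow> nat list option" where
  "stack_exec w = run_stack w [1..<Suc (num_UH w)] [] []"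

definition queue_exec :: "step list \<Rightarrow> nat list option" where
  "queue_exec w = run_queue w [1..<Suc (num_UH w)] [] []"

definition S_map :: "step list \<Rightarrow> nat list" where
  "S_map w = the (stack_exec w)"

definition Q_map :: "step list \<Rightarrow> nat list" where
  "Q_map w = the (queue_exec w)"

definition perms :: "nat \<Rightarrow> nat list set" where
  "perms n = {p. distinct p \<and> set p = {1..n}}"

definition avoids312 :: "nat list \<Rightarrow> bool" where
  "avoids312 p \<longleftrightarrow> \<not> (\<exists>i j k. i < j \<and> j < k \<and> k < length p \<and> p ! j < p ! k \<and> p ! k < p ! i)"

definition avoids321 :: "nat list \<Rightarrow> bool" where
  "avoids321 p \<longleftrightarrow> \<not> (\<exists>i j k. i < j \<and> j < k \<and> k < length p \<and> p ! i > p ! j \<and> p ! j > p ! k)"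

definition av312 :: "nat \<Rightarrow> nat list set" where
  "av312 n = {p \<in> perms n. avoids312 p}"

definition av321 :: "nat \<Rightarrow> nat list set" where
  "av321 n = {p \<in> perms n. avoids321 p}"

end

theory Submission
  imports Defs
begin

lemma sorted_union:
  assumes "finite A" "finite B" "\<forall>a\<in>A. \<forall>b\<in>B. a < (b::nat)"
  shows "sorted_list_of_set (A \<union> B) = sorted_list_of_set A @ sorted_list_of_set B"
proof -
  let ?l = "sorted_list_of_set A @ sorted_list_of_set B"
  have s: "sorted_wrt (<) ?l"
    using assms by (simp add: sorted_wrt_append strict_sorted_list_of_set)
  have st: "set ?l = A \<union> B" using assms by simp
  have "sorted_list_of_set (A \<union> B) = sorted_list_of_set (set ?l)" using st by simp
  also have "\<dots> = sort (remdups ?l)" by (rule sorted_list_of_set_sort_remdups)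
  also have "\<dots> = ?l" using s
    by (simp add: strict_sorted_iff sorted_sort_id distinct_remdups_id del: sorted_list_of_set_sort_remdups)
  finally show ?thesis .
qed
fun wd :: "int \<Rightarrow> step list \<Rightarrow> bool" where
  "wd h [] = (h = 0)"
| "wd h (s # w) = (0 \<le> h + step_val s \<and> wd (h + step_val s) w)"

lemma height_Cons[simp]: "height (s # w) = step_val s + height w"
  by (simp add: height_def)
lemma height_Nil[simp]: "height [] = 0"
  by (simp add: height_def)

lemma all_le_Suc: "(\<forall>k\<le>Suc n. P k) = (P 0 \<and> (\<forall>k\<le>n. P (Suc k)))"
  apply (rule iffI)
   apply simp
  apply (intro allI impI)
  subgoal for k by (cases k) auto
  done

lemma wd_iff: "0 \<le> h \<Longrightarrow> wd h w \<longleftrightarrow> (\<forall>k\<le>length w. 0 \<le> h + height (take k w)) \<and> h + height w = 0"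
proof (induction w arbitrary: h)
  case Nil then show ?case by simp
next
  case (Cons s w)
  have e: "(\<forall>k\<le>length (s # w). 0 \<le> h + height (take k (s # w))) \<longleftrightarrow>
     (\<forall>k\<le>length w. 0 \<le> (h + step_val s) + height (take k w))"
    using Cons.prems by (simp only: length_Cons all_le_Suc take_Suc_Cons take_0 height_Cons height_Nil) (simp add: algebra_simps)
  have f: "(\<forall>k\<le>length w. 0 \<le> (h + step_val s) + height (take k w)) \<Longrightarrow> 0 \<le> h + step_val s"
    by (drule spec[of _ 0]) simp
  show ?case
  proof (cases "0 \<le> h + step_val s")
    case True
    then show ?thesis using Cons.IH[OF True] e by (simp add: algebra_simps)
  next
    case False
    then show ?thesis using e f by auto
  qed
qed

lemma weak_dyck_wd: "weak_dyck w = wd 0 w"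
  by (simp add: weak_dyck_def wd_iff)

fun pl :: "step list \<Rightarrow> bool" where
  "pl [] = True" | "pl [x] = True" | "pl (x # y # w) = (\<not>(x = U \<and> y = D) \<and> pl (y # w))"

lemma peakless_Cons: "peakless (x # w) \<longleftrightarrow> \<not>(x = U \<and> w \<noteq> [] \<and> hd w = D) \<and> peakless w"
  unfolding peakless_def
  apply (cases w)
   apply simp
  apply (auto simp: All_less_Suc2 all_conj_distrib)
  done

lemma peakless_pl: "peakless w = pl w"
  apply (induction w rule: pl.induct)
    apply (simp add: peakless_def)
   apply (simp add: peakless_def)
  by (subst peakless_Cons) auto

lemma pl_Cons: "pl (x # w) \<longleftrightarrow> \<not>(x = U \<and> w \<noteq> [] \<and> hd w = D) \<and> pl w"
  by (cases w) auto


fun tok :: "nat \<Rightarrow> nat list \<Rightarrow> step list" where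
  "tok m [] = []"
| "tok m (x # xs) = (if m < x then replicate (x - m - 1) U @ H # tok x xs else D # tok m xs)"

fun sim :: "(nat set \<Rightarrow> nat) \<Rightarrow> nat \<Rightarrow> nat set \<Rightarrow> nat list \<Rightarrow> bool" where
  "sim sel m R [] = (R = {})"
| "sim sel m R (x # xs) = (if m < x then sim sel x (R \<union> {Suc m..<x}) xs
      else (x \<in> R \<and> x = sel R \<and> sim sel m (R - {x}) xs))"

lemma run_stack_Us: "length l = k \<Longrightarrow>
  run_stack (replicate k U @ w) (l @ inp) st out = run_stack w inp (rev l @ st) out"
  by (induction l arbitrary: k st) auto

lemma run_queue_Us: "length l = k \<Longrightarrow>
  run_queue (replicate k U @ w) (l @ inp) q out = run_queue w inp (q @ l) out"
  by (induction l arbitrary: k q) auto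

lemma upt_split3: "m < x \<Longrightarrow> x \<le> N \<Longrightarrow> [Suc m..<Suc N] = [Suc m..<x] @ x # [Suc x..<Suc N]"
proof -
  assume a: "m < x" "x \<le> N"
  have "[Suc m..<Suc N] = [Suc m..<x] @ [x..<Suc N]"
    using upt_add_eq_append[of "Suc m" x "Suc N - x"] a by simp
  then show ?thesis using a by (simp del: upt_Suc add: upt_conv_Cons)
qed

lemma sorted_ins_range:
  assumes "finite R" "\<forall>y\<in>R. y \<le> m"
  shows "sorted_list_of_set (R \<union> {Suc m..<x}) = sorted_list_of_set R @ [Suc m..<x]"
proof -
  have "sorted_list_of_set (R \<union> {Suc m..<x}) = sorted_list_of_set R @ sorted_list_of_set {Suc m..<x}"
    by (rule sorted_union) (use assms in auto)
  then show ?thesis by simp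
qed

lemma sorted_remove_Max:
  assumes "finite (R::nat set)" "R \<noteq> {}"
  shows "sorted_list_of_set R = sorted_list_of_set (R - {Max R}) @ [Max R]"
proof -
  have mi: "Max R \<in> R" using assms by (rule Max_in)
  have "R = (R - {Max R}) \<union> {Max R}" using mi by auto
  then have "sorted_list_of_set R = sorted_list_of_set ((R - {Max R}) \<union> {Max R})" by simp
  also have "\<dots> = sorted_list_of_set (R - {Max R}) @ [Max R]"
  proof -
    have "sorted_list_of_set ((R - {Max R}) \<union> {Max R}) = sorted_list_of_set (R - {Max R}) @ sorted_list_of_set {Max R}"
      by (rule sorted_union) (use assms in \<open>auto simp: order_le_neq_trans\<close>)
    then show ?thesis by simp
  qed
  finally show ?thesis .
qed

lemma sorted_remove_Min:
  assumes "finite R" "R \<noteq> {}"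
  shows "sorted_list_of_set R = Min R # sorted_list_of_set (R - {Min R})"
  using assms by (rule sorted_list_of_set_nonempty)

lemma runA_stack:
  "sim Max m R xs \<Longrightarrow> finite R \<Longrightarrow> \<forall>y\<in>R. y \<le> m \<Longrightarrow> \<forall>x\<in>set xs. x \<le> N \<Longrightarrow>
   run_stack (tok m xs) [Suc m..<Suc N] (rev (sorted_list_of_set R)) out = Some (out @ xs)"
proof (induction xs arbitrary: m R out)
  case Nil then show ?case by simp
next
  case (Cons x xs)
  show ?case
  proof (cases "m < x")
    case True
    have xN: "x \<le> N" using Cons.prems by simp
    have "run_stack (tok m (x # xs)) [Suc m..<Suc N] (rev (sorted_list_of_set R)) out
        = run_stack (replicate (x - m - 1) U @ H # tok x xs) ([Suc m..<x] @ x # [Suc x..<Suc N]) (rev (sorted_list_of_set R)) out"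
      by (subst upt_split3[OF True xN]) (simp add: True)
    also have "\<dots> = run_stack (H # tok x xs) (x # [Suc x..<Suc N]) (rev [Suc m..<x] @ rev (sorted_list_of_set R)) out"
      by (rule run_stack_Us) simp
    also have "\<dots> = run_stack (tok x xs) [Suc x..<Suc N] (rev (sorted_list_of_set (R \<union> {Suc m..<x}))) (out @ [x])"
      using Cons.prems by (simp add: sorted_ins_range)
    also have "\<dots> = Some ((out @ [x]) @ xs)"
      using Cons.prems True by (intro Cons.IH) auto
    finally show ?thesis by simp
  next
    case False
    then have x: "x \<in> R" "x = Max R" "sim Max m (R - {x}) xs" using Cons.prems by auto
    then have ne: "R \<noteq> {}" by auto
    have "rev (sorted_list_of_set R) = x # rev (sorted_list_of_set (R - {x}))"
      using sorted_remove_Max[OF Cons.prems(2) ne] x by simp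
    then have "run_stack (tok m (x # xs)) [Suc m..<Suc N] (rev (sorted_list_of_set R)) out
        = run_stack (tok m xs) [Suc m..<Suc N] (rev (sorted_list_of_set (R - {x}))) (out @ [x])"
      using False by simp
    also have "\<dots> = Some ((out @ [x]) @ xs)"
      using Cons.prems x by (intro Cons.IH) auto
    finally show ?thesis by simp
  qed
qed

lemma runA_queue:
  "sim Min m R xs \<Longrightarrow> finite R \<Longrightarrow> \<forall>y\<in>R. y \<le> m \<Longrightarrow> \<forall>x\<in>set xs. x \<le> N \<Longrightarrow>
   run_queue (tok m xs) [Suc m..<Suc N] (sorted_list_of_set R) out = Some (out @ xs)"
proof (induction xs arbitrary: m R out)
  case Nil then show ?case by simp
next
  case (Cons x xs)
  show ?case
  proof (cases "m < x")
    case True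
    have xN: "x \<le> N" using Cons.prems by simp
    have "run_queue (tok m (x # xs)) [Suc m..<Suc N] (sorted_list_of_set R) out
        = run_queue (replicate (x - m - 1) U @ H # tok x xs) ([Suc m..<x] @ x # [Suc x..<Suc N]) (sorted_list_of_set R) out"
      by (subst upt_split3[OF True xN]) (simp add: True)
    also have "\<dots> = run_queue (H # tok x xs) (x # [Suc x..<Suc N]) (sorted_list_of_set R @ [Suc m..<x]) out"
      by (rule run_queue_Us) simp
    also have "\<dots> = run_queue (tok x xs) [Suc x..<Suc N] (sorted_list_of_set (R \<union> {Suc m..<x})) (out @ [x])"
      using Cons.prems by (simp add: sorted_ins_range)
    also have "\<dots> = Some ((out @ [x]) @ xs)"
      using Cons.prems True by (intro Cons.IH) auto
    finally show ?thesis by simp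
  next
    case False
    then have x: "x \<in> R" "x = Min R" "sim Min m (R - {x}) xs" using Cons.prems by auto
    then have ne: "R \<noteq> {}" by auto
    have "sorted_list_of_set R = x # sorted_list_of_set (R - {x})"
      using sorted_remove_Min[OF Cons.prems(2) ne] x by simp
    then have "run_queue (tok m (x # xs)) [Suc m..<Suc N] (sorted_list_of_set R) out
        = run_queue (tok m xs) [Suc m..<Suc N] (sorted_list_of_set (R - {x})) (out @ [x])"
      using False by simp
    also have "\<dots> = Some ((out @ [x]) @ xs)"
      using Cons.prems x by (intro Cons.IH) auto
    finally show ?thesis by simp
  qed
qed


lemma num_UH_Cons[simp]: "num_UH (x # w) = (if x = D then 0 else 1) + num_UH w"
  by (simp add: num_UH_def)
lemma num_UH_Nil[simp]: "num_UH [] = 0"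
  by (simp add: num_UH_def)
lemma num_UH_Us[simp]: "num_UH (replicate k U @ w) = k + num_UH w"
  by (induction k) auto

lemma wd_Us: "0 \<le> h \<Longrightarrow> wd h (replicate k U @ w) = wd (h + int k) w"
  by (induction k arbitrary: h) (auto simp: algebra_simps)

lemma pl_Us: "pl (replicate k U @ H # w) = pl w"
proof (induction k)
  case 0 then show ?case by (simp add: pl_Cons)
next
  case (Suc k)
  have "hd (replicate k U @ H # w) \<noteq> D" by (cases k) auto
  then show ?case using Suc by (simp add: pl_Cons)
qed

lemma decomp: "wd h w \<Longrightarrow> pl w \<Longrightarrow> 0 \<le> h \<Longrightarrow> w \<noteq> [] \<Longrightarrow>
  (\<exists>w'. w = D # w') \<or> (\<exists>k w'. w = replicate k U @ H # w')"
proof (induction w arbitrary: h)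
  case Nil then show ?case by simp
next
  case (Cons s w)
  show ?case
  proof (cases s)
    case U
    have w1: "wd (h + 1) w" "0 \<le> h + 1" using Cons.prems U by auto
    have wne: "w \<noteq> []" using w1 Cons.prems(3) by (cases w) auto
    have pw: "pl w" "hd w \<noteq> D" using Cons.prems(2) U wne by (auto simp: pl_Cons)
    from Cons.IH[OF w1(1) pw(1) w1(2) wne] pw(2)
    obtain k w' where "w = replicate k U @ H # w'" by auto
    then have "s # w = replicate (Suc k) U @ H # w'" using U by simp
    then show ?thesis by blast
  next
    case D then show ?thesis by simp
  next
    case H then have "s # w = replicate 0 U @ H # w" by simp
    then show ?thesis by blast
  qed
qed

lemma card_ins_range:
  assumes "finite R" "\<forall>y\<in>R. y \<le> m"
  shows "card (R \<union> {Suc m..<x}) = card R + (x - Suc m)"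
proof -
  have "R \<inter> {Suc m..<x} = {}" using assms by auto
  then show ?thesis using assms by (simp add: card_Un_disjoint)
qed

lemma runB_stack:
  "wd (int (card R)) w \<Longrightarrow> pl w \<Longrightarrow> finite R \<Longrightarrow> \<forall>y\<in>R. y \<le> m \<Longrightarrow>
   \<exists>xs. run_stack w [Suc m..<Suc (m + num_UH w)] (rev (sorted_list_of_set R)) out = Some (out @ xs)
      \<and> tok m xs = w \<and> sim Max m R xs"
proof (induction "length w" arbitrary: w m R out rule: less_induct)
  case less
  show ?case
  proof (cases "w = []")
    case True
    then have "R = {}" using less.prems by auto
    then show ?thesis using True by simp
  next
    case False
    from decomp[OF less.prems(1,2) _ False]
    consider (Dc) w' where "w = D # w'" | (Uc) k w' where "w = replicate k U @ H # w'" by auto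
    then show ?thesis
    proof cases
      case Dc
      have c1: "1 \<le> card R" "wd (int (card R) - 1) w'" using less.prems(1) Dc by auto
      then have ne: "R \<noteq> {}" by auto
      define x where "x = Max R"
      have xR: "x \<in> R" using ne less.prems(3) by (simp add: x_def)
      have cR: "int (card (R - {x})) = int (card R) - 1" using xR less.prems(3) c1 by (simp add: of_nat_diff)
      have "rev (sorted_list_of_set R) = x # rev (sorted_list_of_set (R - {x}))"
        using sorted_remove_Max[OF less.prems(3) ne] by (simp add: x_def)
      moreover obtain xs where xs: "run_stack w' [Suc m..<Suc (m + num_UH w')] (rev (sorted_list_of_set (R - {x}))) (out @ [x]) = Some ((out @ [x]) @ xs)"
         "tok m xs = w'" "sim Max m (R - {x}) xs"
        using less.hyps[of w' "R - {x}" m "out @ [x]"] Dc c1 cR less.prems by (auto simp: pl_Cons)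
      ultimately show ?thesis using Dc xR less.prems(4)
        by (intro exI[of _ "x # xs"]) (auto simp: x_def not_less)
    next
      case Uc
      define x where "x = Suc (m + k)"
      have mx: "m < x" "x \<le> m + num_UH w" using Uc by (auto simp: x_def)
      have eqN: "m + num_UH w = x + num_UH w'" using Uc by (simp add: x_def)
      have wd': "wd (int (card (R \<union> {Suc m..<x}))) w'"
        using less.prems(1) Uc card_ins_range[OF less.prems(3,4), of x]
        by (simp add: wd_Us x_def algebra_simps)
      have bnd: "\<forall>y\<in>R \<union> {Suc m..<x}. y \<le> x" using less.prems(4) mx by auto
      have len: "length w' < length w" using Uc by simp
      have pl': "pl w'" using less.prems(2) Uc by (simp add: pl_Us)
      have fin: "finite (R \<union> {Suc m..<x})" using less.prems(3) by simp
      obtain xs where xs: "run_stack w' [Suc x..<Suc (x + num_UH w')] (rev (sorted_list_of_set (R \<union> {Suc m..<x}))) (out @ [x]) = Some ((out @ [x]) @ xs)"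
         "tok x xs = w'" "sim Max x (R \<union> {Suc m..<x}) xs"
        using less.hyps[OF len wd' pl' fin bnd, of "out @ [x]"] by blast
      have "run_stack w [Suc m..<Suc (m + num_UH w)] (rev (sorted_list_of_set R)) out
        = run_stack (replicate k U @ H # w') ([Suc m..<x] @ x # [Suc x..<Suc (x + num_UH w')]) (rev (sorted_list_of_set R)) out"
        using upt_split3[OF mx] eqN Uc by metis
      also have "\<dots> = run_stack (H # w') (x # [Suc x..<Suc (x + num_UH w')]) (rev [Suc m..<x] @ rev (sorted_list_of_set R)) out"
        by (rule run_stack_Us) (simp add: x_def)
      also have "\<dots> = Some ((out @ [x]) @ xs)"
        using xs(1) less.prems by (simp add: sorted_ins_range)
      finally show ?thesis using xs mx Uc by (intro exI[of _ "x # xs"]) (simp add: x_def)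
    qed
  qed
qed

lemma runB_queue:
  "wd (int (card R)) w \<Longrightarrow> pl w \<Longrightarrow> finite R \<Longrightarrow> \<forall>y\<in>R. y \<le> m \<Longrightarrow>
   \<exists>xs. run_queue w [Suc m..<Suc (m + num_UH w)] (sorted_list_of_set R) out = Some (out @ xs)
      \<and> tok m xs = w \<and> sim Min m R xs"
proof (induction "length w" arbitrary: w m R out rule: less_induct)
  case less
  show ?case
  proof (cases "w = []")
    case True
    then have "R = {}" using less.prems by auto
    then show ?thesis using True by simp
  next
    case False
    from decomp[OF less.prems(1,2) _ False]
    consider (Dc) w' where "w = D # w'" | (Uc) k w' where "w = replicate k U @ H # w'" by auto
    then show ?thesis
    proof cases
      case Dc
      have c1: "1 \<le> card R" "wd (int (card R) - 1) w'" using less.prems(1) Dc by auto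
      then have ne: "R \<noteq> {}" by auto
      define x where "x = Min R"
      have xR: "x \<in> R" using ne less.prems(3) by (simp add: x_def)
      have cR: "int (card (R - {x})) = int (card R) - 1" using xR less.prems(3) c1 by (simp add: of_nat_diff)
      have "sorted_list_of_set R = x # sorted_list_of_set (R - {x})"
        using sorted_remove_Min[OF less.prems(3) ne] by (simp add: x_def)
      moreover obtain xs where xs: "run_queue w' [Suc m..<Suc (m + num_UH w')] (sorted_list_of_set (R - {x})) (out @ [x]) = Some ((out @ [x]) @ xs)"
         "tok m xs = w'" "sim Min m (R - {x}) xs"
        using less.hyps[of w' "R - {x}" m "out @ [x]"] Dc c1 cR less.prems by (auto simp: pl_Cons)
      ultimately show ?thesis using Dc xR less.prems(4)
        by (intro exI[of _ "x # xs"]) (auto simp: x_def not_less)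
    next
      case Uc
      define x where "x = Suc (m + k)"
      have mx: "m < x" "x \<le> m + num_UH w" using Uc by (auto simp: x_def)
      have eqN: "m + num_UH w = x + num_UH w'" using Uc by (simp add: x_def)
      have wd': "wd (int (card (R \<union> {Suc m..<x}))) w'"
        using less.prems(1) Uc card_ins_range[OF less.prems(3,4), of x]
        by (simp add: wd_Us x_def algebra_simps)
      have bnd: "\<forall>y\<in>R \<union> {Suc m..<x}. y \<le> x" using less.prems(4) mx by auto
      have len: "length w' < length w" using Uc by simp
      have pl': "pl w'" using less.prems(2) Uc by (simp add: pl_Us)
      have fin: "finite (R \<union> {Suc m..<x})" using less.prems(3) by simp
      obtain xs where xs: "run_queue w' [Suc x..<Suc (x + num_UH w')] (sorted_list_of_set (R \<union> {Suc m..<x})) (out @ [x]) = Some ((out @ [x]) @ xs)"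
         "tok x xs = w'" "sim Min x (R \<union> {Suc m..<x}) xs"
        using less.hyps[OF len wd' pl' fin bnd, of "out @ [x]"] by blast
      have "run_queue w [Suc m..<Suc (m + num_UH w)] (sorted_list_of_set R) out
        = run_queue (replicate k U @ H # w') ([Suc m..<x] @ x # [Suc x..<Suc (x + num_UH w')]) (sorted_list_of_set R) out"
        using upt_split3[OF mx] eqN Uc by metis
      also have "\<dots> = run_queue (H # w') (x # [Suc x..<Suc (x + num_UH w')]) (sorted_list_of_set R @ [Suc m..<x]) out"
        by (rule run_queue_Us) (simp add: x_def)
      also have "\<dots> = Some ((out @ [x]) @ xs)"
        using xs(1) less.prems by (simp add: sorted_ins_range)
      finally show ?thesis using xs mx Uc by (intro exI[of _ "x # xs"]) (simp add: x_def)
    qed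
  qed
qed



lemma sim_set: "sim sel m R xs \<Longrightarrow> finite R \<Longrightarrow> \<forall>y\<in>R. y \<le> m \<Longrightarrow>
  distinct xs \<and> set xs = R \<union> {Suc m..m + num_UH (tok m xs)}"
proof (induction xs arbitrary: m R)
  case Nil then show ?case by simp
next
  case (Cons x xs)
  show ?case
  proof (cases "m < x")
    case True
    have s: "sim sel x (R \<union> {Suc m..<x}) xs" using Cons.prems True by simp
    have b: "\<forall>y\<in>R \<union> {Suc m..<x}. y \<le> x" using Cons.prems(3) True by auto
    from Cons.IH[OF s _ b] Cons.prems(2)
    have ih: "distinct xs" "set xs = R \<union> {Suc m..<x} \<union> {Suc x..x + num_UH (tok x xs)}" by auto
    have nx: "x \<notin> set xs" using ih(2) Cons.prems(3) True by auto
    have e: "m + num_UH (tok m (x # xs)) = x + num_UH (tok x xs)" using True by simp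
    have iv: "{Suc m..x + num_UH (tok x xs)} = {Suc m..<x} \<union> insert x {Suc x..x + num_UH (tok x xs)}"
      using True by auto
    have "set (x # xs) = R \<union> {Suc m..m + num_UH (tok m (x # xs))}"
      unfolding e iv using ih(2) by auto
    then show ?thesis using ih nx by simp
  next
    case False
    have s: "x \<in> R" "sim sel m (R - {x}) xs" using Cons.prems False by auto
    from Cons.IH[OF s(2)] Cons.prems(2,3)
    have ih: "distinct xs" "set xs = (R - {x}) \<union> {Suc m..m + num_UH (tok m xs)}" by auto
    have nx: "x \<notin> set xs" using ih(2) Cons.prems(3) s(1) by auto
    have "set (x # xs) = R \<union> {Suc m..m + num_UH (tok m (x # xs))}"
      using ih(2) False s(1) by auto
    then show ?thesis using ih nx by simp
  qed
qed

lemma sim_wd: "sim sel m R xs \<Longrightarrow> finite R \<Longrightarrow> \<forall>y\<in>R. y \<le> m \<Longrightarrow> wd (int (card R)) (tok m xs)"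
proof (induction xs arbitrary: m R)
  case Nil then show ?case by simp
next
  case (Cons x xs)
  show ?case
  proof (cases "m < x")
    case True
    have s: "sim sel x (R \<union> {Suc m..<x}) xs" using Cons.prems True by simp
    have b: "\<forall>y\<in>R \<union> {Suc m..<x}. y \<le> x" using Cons.prems(3) True by auto
    have ih: "wd (int (card (R \<union> {Suc m..<x}))) (tok x xs)" using Cons.IH[OF s _ b] Cons.prems(2) by auto
    then show ?thesis using True card_ins_range[OF Cons.prems(2,3), of x]
      by (simp add: wd_Us algebra_simps)
  next
    case False
    have s: "x \<in> R" "sim sel m (R - {x}) xs" using Cons.prems False by auto
    have ih: "wd (int (card (R - {x}))) (tok m xs)" using Cons.IH[OF s(2)] Cons.prems(2,3) by auto
    have c: "1 \<le> card R" using s(1) Cons.prems(2) by (metis One_nat_def Suc_leI card_gt_0_iff empty_iff)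
    then show ?thesis using ih False s(1) Cons.prems(2) by (simp add: of_nat_diff)
  qed
qed

lemma pl_tok: "pl (tok m xs)"
  by (induction xs arbitrary: m) (auto simp: pl_Us pl_Cons)


definition mx :: "nat list \<Rightarrow> nat" where "mx pre = Max (insert 0 (set pre))"
definition Rs :: "nat list \<Rightarrow> nat set" where "Rs pre = {1..mx pre} - set pre"
definition cnd :: "(nat set \<Rightarrow> nat) \<Rightarrow> nat list \<Rightarrow> nat \<Rightarrow> bool" where
  "cnd sel pre x = (mx pre < x \<or> (x \<in> Rs pre \<and> x = sel (Rs pre)))"

lemma mx_Nil[simp]: "mx [] = 0" by (simp add: mx_def)
lemma Rs_Nil[simp]: "Rs [] = {}" by (simp add: Rs_def)

lemma mx_snoc: "mx (pre @ [x]) = max (mx pre) x"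
proof -
  have e: "insert 0 (set (pre @ [x])) = insert x (insert 0 (set pre))" by auto
  have "Max (insert x (insert 0 (set pre))) = max x (Max (insert 0 (set pre)))"
    by (rule Max_insert) auto
  then show ?thesis unfolding mx_def e by (simp add: max.commute)
qed

lemma mx_ge: "y \<in> set pre \<Longrightarrow> y \<le> mx pre"
  by (simp add: mx_def)

lemma mx_le: "\<forall>y\<in>set pre. y \<le> n \<Longrightarrow> mx pre \<le> n"
  by (simp add: mx_def)

lemma mx_in: "0 < mx pre \<Longrightarrow> mx pre \<in> set pre"
proof -
  assume a: "0 < mx pre"
  have "mx pre \<in> insert 0 (set pre)" unfolding mx_def by (rule Max_in) auto
  then show ?thesis using a by auto
qed

lemma finite_Rs[simp]: "finite (Rs pre)" by (simp add: Rs_def)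

lemma Rs_snoc_gt: "mx pre < x \<Longrightarrow> Rs (pre @ [x]) = Rs pre \<union> {Suc (mx pre)..<x}"
  unfolding Rs_def mx_snoc by (auto simp: max_def dest: mx_ge)

lemma Rs_snoc_le: "x \<le> mx pre \<Longrightarrow> Rs (pre @ [x]) = Rs pre - {x}"
  unfolding Rs_def mx_snoc by (auto simp: max_def)

lemma sim_cnd: "sim sel (mx pre) (Rs pre) xs \<longleftrightarrow>
  (\<forall>j<length xs. cnd sel (pre @ take j xs) (xs ! j)) \<and> Rs (pre @ xs) = {}"
proof (induction xs arbitrary: pre)
  case Nil then show ?case by simp
next
  case (Cons x xs)
  have r: "(\<forall>j<length (x # xs). cnd sel (pre @ take j (x # xs)) ((x # xs) ! j)) \<and> Rs (pre @ x # xs) = {}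
     \<longleftrightarrow> cnd sel pre x \<and> ((\<forall>j<length xs. cnd sel ((pre @ [x]) @ take j xs) (xs ! j)) \<and> Rs ((pre @ [x]) @ xs) = {})"
    by (simp add: All_less_Suc2)
  show ?case
  proof (cases "mx pre < x")
    case True
    then show ?thesis unfolding r Cons.IH[of "pre @ [x]", symmetric]
      by (simp add: mx_snoc Rs_snoc_gt cnd_def)
  next
    case False
    then show ?thesis unfolding r Cons.IH[of "pre @ [x]", symmetric]
      by (auto simp: mx_snoc Rs_snoc_le cnd_def max_def)
  qed
qed

lemma in_take: "y \<in> set (take j p) \<longleftrightarrow> (\<exists>i<j. i < length p \<and> p ! i = y)"
  by (auto simp: in_set_conv_nth)

lemma Rs_perm: "p \<in> perms n \<Longrightarrow> Rs p = {}"
proof -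
  assume p: "p \<in> perms n"
  then have "mx p \<le> n" by (intro mx_le) (auto simp: perms_def)
  then show ?thesis using p by (auto simp: Rs_def perms_def)
qed

lemma sim_perm: "p \<in> perms n \<Longrightarrow> sim sel 0 {} p \<longleftrightarrow> (\<forall>j<length p. cnd sel (take j p) (p ! j))"
  using sim_cnd[of sel "[]" p] Rs_perm[of p n] by simp

lemma perm_cnd_312:
  assumes p: "p \<in> perms n"
  shows "(\<forall>j<length p. cnd Max (take j p) (p ! j)) \<longleftrightarrow> avoids312 p"
proof
  have dp: "distinct p" and sp: "set p = {1..n}" using p by (auto simp: perms_def)
  assume C: "\<forall>j<length p. cnd Max (take j p) (p ! j)"
  show "avoids312 p"
    unfolding avoids312_def
  proof
    assume "\<exists>i j k. i < j \<and> j < k \<and> k < length p \<and> p ! j < p ! k \<and> p ! k < p ! i"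
    then obtain i j k where ijk: "i < j" "j < k" "k < length p" "p ! j < p ! k" "p ! k < p ! i" by blast
    let ?pre = "take j p"
    have "p ! i \<in> set ?pre" using ijk by (auto simp: in_take)
    then have im: "p ! i \<le> mx ?pre" by (rule mx_ge)
    have c: "cnd Max ?pre (p ! j)" using C ijk by auto
    then have pj: "p ! j = Max (Rs ?pre)" using im ijk by (auto simp: cnd_def)
    have "p ! k \<notin> set ?pre"
    proof
      assume "p ! k \<in> set ?pre"
      then obtain i' where "i' < j" "i' < length p" "p ! i' = p ! k" by (auto simp: in_take)
      then show False using dp ijk nth_eq_iff_index_eq by fastforce
    qed
    moreover have "1 \<le> p ! k" using sp ijk nth_mem[of k p] by auto
    ultimately have "p ! k \<in> Rs ?pre" using im ijk by (auto simp: Rs_def)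
    then have "p ! k \<le> Max (Rs ?pre)" by simp
    then show False using pj ijk by simp
  qed
next
  have dp: "distinct p" and sp: "set p = {1..n}" using p by (auto simp: perms_def)
  assume A: "avoids312 p"
  show "\<forall>j<length p. cnd Max (take j p) (p ! j)"
  proof (intro allI impI)
    fix j assume j: "j < length p"
    let ?pre = "take j p"
    let ?m = "mx ?pre"
    let ?x = "p ! j"
    show "cnd Max ?pre ?x"
    proof (cases "?m < ?x")
      case True then show ?thesis by (simp add: cnd_def)
    next
      case False
      have xnot: "?x \<notin> set ?pre"
      proof
        assume "?x \<in> set ?pre"
        then obtain i' where "i' < j" "i' < length p" "p ! i' = ?x" by (auto simp: in_take)
        then show False using dp j nth_eq_iff_index_eq by fastforce
      qed
      have x1: "1 \<le> ?x" using sp j nth_mem[of j p] by auto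
      have xR: "?x \<in> Rs ?pre" using False xnot x1 by (auto simp: Rs_def)
      define y where "y = Max (Rs ?pre)"
      have yR: "y \<in> Rs ?pre" unfolding y_def using xR by (intro Max_in) auto
      have xy: "?x \<le> y" unfolding y_def using xR by simp
      have "y = ?x"
      proof (rule ccontr)
        assume ne: "y \<noteq> ?x"
        have mpos: "0 < ?m" using False x1 by simp
        then have "?m \<in> set ?pre" by (rule mx_in)
        then obtain i where i: "i < j" "i < length p" "p ! i = ?m" by (auto simp: in_take)
        have ym: "y \<le> ?m" "y \<notin> set ?pre" "1 \<le> y" using yR by (auto simp: Rs_def)
        have mn: "?m \<le> n" using sp by (intro mx_le) (auto dest: in_set_takeD)
        have "y \<in> set p" using ym mn sp by auto
        then obtain k where k: "k < length p" "p ! k = y" by (auto simp: in_set_conv_nth)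
        have kj: "j < k"
        proof -
          have "\<not> k < j" using k ym(2) by (auto simp: in_take)
          moreover have "k \<noteq> j" using k ne by auto
          ultimately show ?thesis by simp
        qed
        have "y \<noteq> ?m" using ym(2) \<open>?m \<in> set ?pre\<close> by auto
        then have "p ! j < p ! k \<and> p ! k < p ! i" using xy ne ym(1) k i by auto
        then show False using A i kj k unfolding avoids312_def by blast
      qed
      then show ?thesis using xR by (simp add: cnd_def y_def)
    qed
  qed
qed


lemma perm_cnd_321:
  assumes p: "p \<in> perms n"
  shows "(\<forall>j<length p. cnd Min (take j p) (p ! j)) \<longleftrightarrow> avoids321 p"
proof
  have dp: "distinct p" and sp: "set p = {1..n}" using p by (auto simp: perms_def)
  assume C: "\<forall>j<length p. cnd Min (take j p) (p ! j)"
  show "avoids321 p"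
    unfolding avoids321_def
  proof
    assume "\<exists>i j k. i < j \<and> j < k \<and> k < length p \<and> p ! i > p ! j \<and> p ! j > p ! k"
    then obtain i j k where ijk: "i < j" "j < k" "k < length p" "p ! i > p ! j" "p ! j > p ! k" by blast
    let ?pre = "take j p"
    have "p ! i \<in> set ?pre" using ijk by (auto simp: in_take)
    then have im: "p ! i \<le> mx ?pre" by (rule mx_ge)
    have c: "cnd Min ?pre (p ! j)" using C ijk by auto
    then have pj: "p ! j = Min (Rs ?pre)" using im ijk by (auto simp: cnd_def)
    have "p ! k \<notin> set ?pre"
    proof
      assume "p ! k \<in> set ?pre"
      then obtain i' where "i' < j" "i' < length p" "p ! i' = p ! k" by (auto simp: in_take)
      then show False using dp ijk nth_eq_iff_index_eq by fastforce
    qed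
    moreover have "1 \<le> p ! k" using sp ijk nth_mem[of k p] by auto
    ultimately have "p ! k \<in> Rs ?pre" using im ijk by (auto simp: Rs_def)
    then have "Min (Rs ?pre) \<le> p ! k" by simp
    then show False using pj ijk by simp
  qed
next
  have dp: "distinct p" and sp: "set p = {1..n}" using p by (auto simp: perms_def)
  assume A: "avoids321 p"
  show "\<forall>j<length p. cnd Min (take j p) (p ! j)"
  proof (intro allI impI)
    fix j assume j: "j < length p"
    let ?pre = "take j p"
    let ?m = "mx ?pre"
    let ?x = "p ! j"
    show "cnd Min ?pre ?x"
    proof (cases "?m < ?x")
      case True then show ?thesis by (simp add: cnd_def)
    next
      case False
      have xnot: "?x \<notin> set ?pre"
      proof
        assume "?x \<in> set ?pre"
        then obtain i' where "i' < j" "i' < length p" "p ! i' = ?x" by (auto simp: in_take)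
        then show False using dp j nth_eq_iff_index_eq by fastforce
      qed
      have x1: "1 \<le> ?x" using sp j nth_mem[of j p] by auto
      have xR: "?x \<in> Rs ?pre" using False xnot x1 by (auto simp: Rs_def)
      define y where "y = Min (Rs ?pre)"
      have yR: "y \<in> Rs ?pre" unfolding y_def using xR by (intro Min_in) auto
      have xy: "y \<le> ?x" unfolding y_def using xR by simp
      have "y = ?x"
      proof (rule ccontr)
        assume ne: "y \<noteq> ?x"
        have mpos: "0 < ?m" using False x1 by simp
        then have "?m \<in> set ?pre" by (rule mx_in)
        then obtain i where i: "i < j" "i < length p" "p ! i = ?m" by (auto simp: in_take)
        have ym: "y \<le> ?m" "y \<notin> set ?pre" "1 \<le> y" using yR by (auto simp: Rs_def)
        have mn: "?m \<le> n" using sp by (intro mx_le) (auto dest: in_set_takeD)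
        have "y \<in> set p" using ym mn sp by auto
        then obtain k where k: "k < length p" "p ! k = y" by (auto simp: in_set_conv_nth)
        have kj: "j < k"
        proof -
          have "\<not> k < j" using k ym(2) by (auto simp: in_take)
          moreover have "k \<noteq> j" using k ne by auto
          ultimately show ?thesis by simp
        qed
        have "?x \<noteq> ?m" using xnot \<open>?m \<in> set ?pre\<close> by auto
        then have "?x < ?m" using False by simp
        have "p ! i > p ! j \<and> p ! j > p ! k" using xy ne k i \<open>?x < ?m\<close> by (auto simp: order_le_neq_trans)
        then show False using A i kj k unfolding avoids321_def by blast
      qed
      then show ?thesis using xR by (simp add: cnd_def y_def)
    qed
  qed
qed


lemma PP_char: "w \<in> peakless_paths n \<longleftrightarrow> wd 0 w \<and> pl w \<and> num_UH w = n"
  by (simp add: peakless_paths_def weak_dyck_wd peakless_pl)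

lemma sim_perms: "sim sel 0 {} p \<Longrightarrow> p \<in> perms (num_UH (tok 0 p))"
  using sim_set[of sel 0 "{}" p] by (simp add: perms_def)

lemma interval_eq: "{1..a} = {1..(b::nat)} \<Longrightarrow> a = b"
  by (metis card_atLeastAtMost diff_Suc_1)

lemma stack_fwd: "P \<in> peakless_paths n \<Longrightarrow>
  stack_exec P = Some (S_map P) \<and> tok 0 (S_map P) = P \<and> S_map P \<in> av312 n"
proof -
  assume P: "P \<in> peakless_paths n"
  then have a: "wd (int (card {})) P" "pl P" "num_UH P = n" by (auto simp: PP_char)
  obtain xs where xs: "run_stack P [Suc 0..<Suc (0 + num_UH P)] (rev (sorted_list_of_set {})) [] = Some ([] @ xs)"
     "tok 0 xs = P" "sim Max 0 {} xs"
    using runB_stack[OF a(1,2), of 0 "[]"] by auto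
  have se: "stack_exec P = Some xs" using xs(1) by (simp add: stack_exec_def)
  then have S: "S_map P = xs" by (simp add: S_map_def)
  have pm: "xs \<in> perms n" using sim_perms[OF xs(3)] xs(2) a(3) by simp
  have "avoids312 xs" using xs(3) sim_perm[OF pm] perm_cnd_312[OF pm] by simp
  then show ?thesis using se S xs pm by (simp add: av312_def)
qed

lemma queue_fwd: "P \<in> peakless_paths n \<Longrightarrow>
  queue_exec P = Some (Q_map P) \<and> tok 0 (Q_map P) = P \<and> Q_map P \<in> av321 n"
proof -
  assume P: "P \<in> peakless_paths n"
  then have a: "wd (int (card {})) P" "pl P" "num_UH P = n" by (auto simp: PP_char)
  obtain xs where xs: "run_queue P [Suc 0..<Suc (0 + num_UH P)] (sorted_list_of_set {}) [] = Some ([] @ xs)"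
     "tok 0 xs = P" "sim Min 0 {} xs"
    using runB_queue[OF a(1,2), of 0 "[]"] by auto
  have se: "queue_exec P = Some xs" using xs(1) by (simp add: queue_exec_def)
  then have S: "Q_map P = xs" by (simp add: Q_map_def)
  have pm: "xs \<in> perms n" using sim_perms[OF xs(3)] xs(2) a(3) by simp
  have "avoids321 xs" using xs(3) sim_perm[OF pm] perm_cnd_321[OF pm] by simp
  then show ?thesis using se S xs pm by (simp add: av321_def)
qed

lemma tok_PP: "sim sel 0 {} p \<Longrightarrow> p \<in> perms n \<Longrightarrow> tok 0 p \<in> peakless_paths n"
proof -
  assume s: "sim sel 0 {} p" and p: "p \<in> perms n"
  have "num_UH (tok 0 p) = n"
    using sim_perms[OF s] p by (auto simp: perms_def intro: interval_eq)
  moreover have "wd 0 (tok 0 p)" using sim_wd[OF s] by simp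
  ultimately show ?thesis by (simp add: PP_char pl_tok)
qed

lemma stack_bwd: "p \<in> av312 n \<Longrightarrow> tok 0 p \<in> peakless_paths n \<and> S_map (tok 0 p) = p"
proof -
  assume a: "p \<in> av312 n"
  then have pm: "p \<in> perms n" and av: "avoids312 p" by (auto simp: av312_def)
  have s: "sim Max 0 {} p" using sim_perm[OF pm] perm_cnd_312[OF pm] av by simp
  have t: "tok 0 p \<in> peakless_paths n" by (rule tok_PP[OF s pm])
  then have nu: "num_UH (tok 0 p) = n" by (simp add: PP_char)
  have "run_stack (tok 0 p) [Suc 0..<Suc n] (rev (sorted_list_of_set {})) [] = Some ([] @ p)"
    using pm by (intro runA_stack[OF s]) (auto simp: perms_def)
  then have "stack_exec (tok 0 p) = Some p" by (simp add: stack_exec_def nu)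
  then show ?thesis using t by (simp add: S_map_def)
qed

lemma queue_bwd: "p \<in> av321 n \<Longrightarrow> tok 0 p \<in> peakless_paths n \<and> Q_map (tok 0 p) = p"
proof -
  assume a: "p \<in> av321 n"
  then have pm: "p \<in> perms n" and av: "avoids321 p" by (auto simp: av321_def)
  have s: "sim Min 0 {} p" using sim_perm[OF pm] perm_cnd_321[OF pm] av by simp
  have t: "tok 0 p \<in> peakless_paths n" by (rule tok_PP[OF s pm])
  then have nu: "num_UH (tok 0 p) = n" by (simp add: PP_char)
  have "run_queue (tok 0 p) [Suc 0..<Suc n] (sorted_list_of_set {}) [] = Some ([] @ p)"
    using pm by (intro runA_queue[OF s]) (auto simp: perms_def)
  then have "queue_exec (tok 0 p) = Some p" by (simp add: queue_exec_def nu)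
  then show ?thesis using t by (simp add: Q_map_def)
qed

lemma bij_S: "bij_betw S_map (peakless_paths n) (av312 n)"
  unfolding bij_betw_def
proof
  show "inj_on S_map (peakless_paths n)"
    by (metis inj_onI stack_fwd)
  show "S_map ` peakless_paths n = av312 n"
  proof
    show "S_map ` peakless_paths n \<subseteq> av312 n" using stack_fwd by blast
    show "av312 n \<subseteq> S_map ` peakless_paths n"
    proof
      fix p assume "p \<in> av312 n"
      then show "p \<in> S_map ` peakless_paths n" using stack_bwd[of p n] by (metis image_eqI)
    qed
  qed
qed

lemma bij_Q: "bij_betw Q_map (peakless_paths n) (av321 n)"
  unfolding bij_betw_def
proof
  show "inj_on Q_map (peakless_paths n)"
    by (metis inj_onI queue_fwd)
  show "Q_map ` peakless_paths n = av321 n"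
  proof
    show "Q_map ` peakless_paths n \<subseteq> av321 n" using queue_fwd by blast
    show "av321 n \<subseteq> Q_map ` peakless_paths n"
    proof
      fix p assume "p \<in> av321 n"
      then show "p \<in> Q_map ` peakless_paths n" using queue_bwd[of p n] by (metis image_eqI)
    qed
  qed
qed


definition W :: "nat \<Rightarrow> nat \<Rightarrow> step list set" where
  "W h n = {w. wd (int h) w \<and> pl w \<and> num_UH w = n}"
definition W' :: "nat \<Rightarrow> nat \<Rightarrow> step list set" where
  "W' h n = {w \<in> W h n. \<not> (\<exists>v. w = D # v)}"

lemma len_bound: "wd h w \<Longrightarrow> int (length w) \<le> 2 * int (num_UH w) + h"
proof (induction w arbitrary: h)
  case Nil then show ?case by simp
next
  case (Cons s w)
  then show ?case by (cases s) (fastforce)+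
qed

lemma UNIV_step: "(UNIV :: step set) = {U, D, H}"
  using step.exhaust by auto

lemma finite_W: "finite (W h n)"
proof -
  have "W h n \<subseteq> {xs. set xs \<subseteq> UNIV \<and> length xs \<le> 2 * n + h}"
    using len_bound by (fastforce simp: W_def)
  moreover have "finite {xs. set xs \<subseteq> (UNIV :: step set) \<and> length xs \<le> 2 * n + h}"
    by (rule finite_lists_length_le) (simp add: UNIV_step)
  ultimately show ?thesis by (rule finite_subset)
qed

lemma finite_W': "finite (W' h n)"
  using finite_W[of h n] by (simp add: W'_def)

lemma list_step_cases: "(w::step list) = [] \<or> (\<exists>v. w = U # v) \<or> (\<exists>v. w = D # v) \<or> (\<exists>v. w = H # v)"
  by (metis list.exhaust step.exhaust)

lemma W_Nil: "[] \<in> W h n \<longleftrightarrow> h = 0 \<and> n = 0"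
  by (auto simp: W_def)
lemma W_D: "D # v \<in> W h n \<longleftrightarrow> 0 < h \<and> v \<in> W (h - 1) n"
  by (cases h) (auto simp: W_def pl_Cons)
lemma W_H: "H # v \<in> W h n \<longleftrightarrow> 0 < n \<and> v \<in> W h (n - 1)"
  by (cases n) (auto simp: W_def pl_Cons)
lemma W_U: "U # v \<in> W h n \<longleftrightarrow> 0 < n \<and> v \<in> W' (Suc h) (n - 1)"
proof -
  have a: "pl (U # v) \<longleftrightarrow> pl v \<and> \<not> (\<exists>v'. v = D # v')" by (cases v) auto
  show ?thesis unfolding W'_def W_def using a by (cases n) (auto simp: algebra_simps)
qed

lemma W_00: "W 0 0 = {[]}"
proof -
  have "w \<in> W 0 0 \<longleftrightarrow> w = []" for w
    using list_step_cases[of w] by (elim disjE exE) (auto simp: W_Nil W_D W_H W_U)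
  then show ?thesis by auto
qed

lemma W_S0: "W (Suc h) 0 = (#) D ` W h 0"
proof -
  have "w \<in> W (Suc h) 0 \<longleftrightarrow> w \<in> (#) D ` W h 0" for w
    using list_step_cases[of w] by (elim disjE exE) (auto simp: W_Nil W_D W_H W_U)
  then show ?thesis by auto
qed

lemma W_0S: "W 0 (Suc n) = (#) H ` W 0 n \<union> (#) U ` W' 1 n"
proof -
  have "w \<in> W 0 (Suc n) \<longleftrightarrow> w \<in> (#) H ` W 0 n \<union> (#) U ` W' 1 n" for w
    using list_step_cases[of w] by (elim disjE exE) (auto simp: W_Nil W_D W_H W_U)
  then show ?thesis by auto
qed

lemma W_SS: "W (Suc h) (Suc n) = (#) D ` W h (Suc n) \<union> ((#) H ` W (Suc h) n \<union> (#) U ` W' (Suc (Suc h)) n)"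
proof -
  have "w \<in> W (Suc h) (Suc n) \<longleftrightarrow> w \<in> (#) D ` W h (Suc n) \<union> ((#) H ` W (Suc h) n \<union> (#) U ` W' (Suc (Suc h)) n)" for w
    using list_step_cases[of w] by (elim disjE exE) (auto simp: W_Nil W_D W_H W_U)
  then show ?thesis by auto
qed

lemma W_split: "W (Suc h) n = W' (Suc h) n \<union> (#) D ` W h n"
proof -
  have "w \<in> W (Suc h) n \<longleftrightarrow> w \<in> W' (Suc h) n \<union> (#) D ` W h n" for w
    using list_step_cases[of w] by (elim disjE exE) (auto simp: W_Nil W_D W_H W_U W'_def)
  then show ?thesis by auto
qed

lemma inj_Cons: "inj_on ((#) x) A" by (auto intro: inj_onI)

lemma card_img: "card ((#) x ` A) = card A"
  by (rule card_image[OF inj_Cons])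

lemma cW'_eq: "card (W' (Suc h) n) + card (W h n) = card (W (Suc h) n)"
proof -
  have "card (W (Suc h) n) = card (W' (Suc h) n) + card ((#) D ` W h n)"
    unfolding W_split by (rule card_Un_disjoint) (auto simp: finite_W finite_W' W'_def)
  then show ?thesis by (simp add: card_img)
qed

lemma cW_00: "card (W 0 0) = 1" by (simp add: W_00)
lemma cW_S0: "card (W (Suc h) 0) = card (W h 0)" by (simp add: W_S0 card_img)
lemma cW_0S: "card (W 0 (Suc n)) = card (W 0 n) + card (W' 1 n)"
proof -
  have "card (W 0 (Suc n)) = card ((#) H ` W 0 n) + card ((#) U ` W' 1 n)"
    unfolding W_0S by (rule card_Un_disjoint) (auto simp: finite_W finite_W')
  then show ?thesis by (simp add: card_img)
qed
lemma cW_SS: "card (W (Suc h) (Suc n)) = card (W h (Suc n)) + card (W (Suc h) n) + card (W' (Suc (Suc h)) n)"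
proof -
  have "card (W (Suc h) (Suc n)) = card ((#) D ` W h (Suc n)) + card ((#) H ` W (Suc h) n \<union> (#) U ` W' (Suc (Suc h)) n)"
    unfolding W_SS by (rule card_Un_disjoint) (auto simp: finite_W finite_W')
  also have "card ((#) H ` W (Suc h) n \<union> (#) U ` W' (Suc (Suc h)) n) = card ((#) H ` W (Suc h) n) + card ((#) U ` W' (Suc (Suc h)) n)"
    by (rule card_Un_disjoint) (auto simp: finite_W finite_W')
  finally show ?thesis by (simp add: card_img)
qed

definition bal :: "nat \<Rightarrow> nat \<Rightarrow> int" where
  "bal h n = int ((2 * n + h) choose n) - (case n of 0 \<Rightarrow> 0 | Suc k \<Rightarrow> int ((2 * n + h) choose k))"

lemma bal_0: "bal h 0 = 1" by (simp add: bal_def)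

lemma bal_A: "bal 0 (Suc n) = bal 1 n"
proof (cases n)
  case 0 then show ?thesis by (simp add: bal_def)
next
  case (Suc k)
  define M where "M = Suc (2 * n)"
  have e1: "2 * Suc n + 0 = Suc M" "2 * n + 1 = M" by (simp_all add: M_def)
  have sym: "M choose Suc n = M choose n"
    using binomial_symmetric[of n "Suc (2 * n)"] by (simp add: M_def)
  have p1: "Suc M choose Suc n = (M choose n) + (M choose Suc n)" by (rule binomial_Suc_Suc)
  have p2: "Suc M choose n = (M choose k) + (M choose n)" using Suc binomial_Suc_Suc[of M k] by (simp only:)
  have b1: "bal 0 (Suc n) = int (Suc M choose Suc n) - int (Suc M choose n)"
    by (simp only: bal_def e1 nat.case)
  have b2: "bal 1 n = int (M choose n) - int (M choose k)"
    unfolding bal_def e1 using Suc by simp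
  show ?thesis unfolding b1 b2 p1 p2 sym by simp
qed

lemma bal_B: "bal (Suc h) (Suc n) = bal h (Suc n) + bal (Suc (Suc h)) n"
proof (cases n)
  case 0 then show ?thesis by (simp add: bal_def)
next
  case (Suc k)
  define N where "N = Suc (Suc (2 * n + h))"
  have e1: "2 * Suc n + Suc h = Suc N" "2 * Suc n + h = N" "2 * n + Suc (Suc h) = N"
    by (simp_all add: N_def)
  have p1: "Suc N choose Suc n = (N choose n) + (N choose Suc n)" by (rule binomial_Suc_Suc)
  have p2: "Suc N choose n = (N choose k) + (N choose n)" using Suc binomial_Suc_Suc[of N k] by (simp only:)
  have b1: "bal (Suc h) (Suc n) = int (Suc N choose Suc n) - int (Suc N choose n)"
    by (simp only: bal_def e1 nat.case)
  have b2: "bal h (Suc n) = int (N choose Suc n) - int (N choose n)"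
    by (simp only: bal_def e1 nat.case)
  have b3: "bal (Suc (Suc h)) n = int (N choose n) - int (N choose k)"
    unfolding bal_def e1 using Suc by simp
  show ?thesis unfolding b1 b2 b3 p1 p2 by simp
qed

lemma card_W: "int (card (W h n)) = bal h n"
proof (induction n arbitrary: h)
  case 0
  show ?case
  proof (induction h)
    case 0 then show ?case by (simp add: cW_00 bal_0)
  next
    case (Suc h) then show ?case by (simp add: cW_S0 bal_0)
  qed
next
  case (Suc n)
  note outer = Suc.IH
  show ?case
  proof (induction h)
    case 0
    have "card (W 0 (Suc n)) = card (W 1 n)" using cW_0S[of n] cW'_eq[of 0 n] by simp
    then show ?case using outer[of 1] bal_A by simp
  next
    case (Suc h)
    have "card (W (Suc h) (Suc n)) = card (W h (Suc n)) + card (W (Suc (Suc h)) n)"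
      using cW_SS[of h n] cW'_eq[of "Suc h" n] by simp
    then show ?case using Suc.IH outer[of "Suc (Suc h)"] bal_B[of h n] by simp
  qed
qed


lemma PP_W: "peakless_paths n = W 0 n"
  by (auto simp: PP_char W_def)

lemma catalan_closed:
  assumes "1 \<le> n"
  shows "real_of_int (bal 0 n) = real ((2*n+1) choose (n+1)) / real (2*n+1)"
proof -
  obtain k where n: "n = Suc k" using assms by (cases n) auto
  define T where "T = 2 * n"
  have a1: "Suc k * (T choose Suc k) = T * ((T - 1) choose k)" by (rule binomial_absorption)
  have a2: "(T - k) * (T choose k) = T * ((T - 1) choose k)" by (rule binomial_absorb_comp)
  have tk: "T - k = k + 2" using n by (simp add: T_def)
  have key: "n * (T choose n) = (k + 2) * (T choose k)" using a1 a2 tk n by simp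
  have sym: "T choose Suc n = T choose k"
    using binomial_symmetric[of "Suc n" T] n by (simp add: T_def)
  have pas: "(2*n+1) choose (n+1) = (T choose n) + (T choose k)"
    using binomial_Suc_Suc[of T n] sym by (simp add: T_def)
  have bal: "bal 0 n = int (T choose n) - int (T choose k)"
    unfolding bal_def using n by (simp add: T_def)
  have key2: "real n * real (T choose n) = (real k + 2) * real (T choose k)"
    using key by (metis of_nat_add of_nat_mult of_nat_numeral)
  have "real (2*n+1) * real_of_int (bal 0 n) = real ((2*n+1) choose (n+1))"
    unfolding bal pas using key2 n by (simp add: T_def algebra_simps)
  then show ?thesis by (simp add: field_simps)
qed

theorem mainTheorem5:
  fixes n :: nat
  assumes "n \<ge> 1"
  shows "(\<forall>P\<in>peakless_paths n. stack_exec P \<noteq> None)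
    \<and> bij_betw S_map (peakless_paths n) (av312 n)
    \<and> (\<forall>P\<in>peakless_paths n. queue_exec P \<noteq> None)
    \<and> bij_betw Q_map (peakless_paths n) (av321 n)
    \<and> real (card (peakless_paths n)) = real ((2*n+1) choose (n+1)) / real (2*n+1)
    \<and> real (card (av321 n)) = real ((2*n+1) choose (n+1)) / real (2*n+1)
    \<and> bij_betw (Q_map \<circ> the_inv_into (peakless_paths n) S_map) (av312 n) (av321 n)"
proof -
  have c: "real (card (peakless_paths n)) = real ((2*n+1) choose (n+1)) / real (2*n+1)"
  proof -
    have "int (card (peakless_paths n)) = bal 0 n" using card_W[of 0 n] by (simp add: PP_W)
    then have "real (card (peakless_paths n)) = real_of_int (bal 0 n)"
      by (metis of_int_of_nat_eq)
    then show ?thesis using catalan_closed[OF assms] by simp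
  qed
  have c2: "card (av321 n) = card (peakless_paths n)"
    using bij_betw_same_card[OF bij_Q[of n]] by simp
  have b: "bij_betw (Q_map \<circ> the_inv_into (peakless_paths n) S_map) (av312 n) (av321 n)"
    by (rule bij_betw_trans[OF bij_betw_the_inv_into[OF bij_S] bij_Q])
  show ?thesis using stack_fwd queue_fwd bij_S bij_Q c c2 b by auto
qed


end
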